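(* (1) For $N<N'$, $\pi_{N'}\circ\iota_{N,N'}=\pi_N$. (2) For all $N_1,N_2\ge0$, $\pi_{N_1+N_2}\circ\mathfrak m_{N_1,N_2}=\mathfrak m\circ(\pi_{N_1}\times\pi_{N_2})$, where $\mathfrak m:L^-\mathrm{GL}_K\times L^-\mathrm{GL}_K\to L^-\mathrm{GL}_K$ is the group multiplication.
   Context: $\mathcal M(N,K)=\mathrm{Rep}(N,K)/\!/\mathrm{GL}_N$, with $\mathrm{Rep}(N,K)$ the triples $(B,\psi,\overline\psi)$, $B\in\mathrm{Mat}_{N\times N}(\mathbb C)$, $\psi\in\mathrm{Mat}_{N\times K}$, $\overline\psi\in\mathrm{Mat}_{K\times N}$, and $g\cdot(B,\psi,\overline\psi)=(gBg^{-1},g\psi,\overline\psi g^{-1})$. $L^-\mathrm{GL}_K$ is the group (under multiplication of matrix power series) of series $1+\sum_{i\ge1}g_iz^{-i}$, $g_i\in\mathfrak{gl}_K$. $\pi_N(B,\psi,\overline\psi)=1+\overline\psi(z-\widetilde B/2)^{-1}\psi$, $\widetilde B=B+\psi\overline\psi$. $\iota_{N,N'}(B,\psi,\overline\psi)=(\mathrm{diag}(B,0),\binom{\psi}{0},(\overline\psi\ 0))$. $\mathfrak m_{N_1,N_2}$ sends $(B^{(1)},\psi^{(1)},\overline\psi^{(1)})\times(B^{(2)},\psi^{(2)},\overline\psi^{(2)})$ to $\left(\begin{bmatrix}B^{(1)}&\psi^{(1)}\overline\psi^{(2)}\\-\psi^{(2)}\overline\psi^{(1)}&B^{(2)}\end{bmatrix},\begin{bmatrix}\psi^{(1)}\\\psi^{(2)}\end{bmatrix},\begin{bmatrix}\overline\psi^{(1)}&\overline\psi^{(2)}\end{bmatrix}\right)$.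 *)

theory Defs
  imports "Jordan_Normal_Form.Matrix"
begin

type_synonym triple = "complex mat \<times> complex mat \<times> complex mat"

definition Rep :: "nat \<Rightarrow> nat \<Rightarrow> triple set" where
  "Rep N K = {(B, \<psi>, \<psi>b). B \<in> carrier_mat N N \<and> \<psi> \<in> carrier_mat N K \<and> \<psi>b \<in> carrier_mat K N}"

text \<open>Elements of L^- GL_K are represented by their coefficient sequence:
  g 0 = 1 (K x K identity), g i = i-th coefficient of z^{-i}.\<close>
definition in_LminusGL :: "nat \<Rightarrow> (nat \<Rightarrow> complex mat) \<Rightarrow> bool" where
  "in_LminusGL K g \<longleftrightarrow> g 0 = 1\<^sub>m K \<and> (\<forall>i. g i \<in> carrier_mat K K)"

text \<open>Group multiplication in L^- GL_K: Cauchy product of matrix power series in z^{-1}.\<close>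
definition loop_mult :: "nat \<Rightarrow> (nat \<Rightarrow> complex mat) \<Rightarrow> (nat \<Rightarrow> complex mat) \<Rightarrow> nat \<Rightarrow> complex mat" where
  "loop_mult K g h n = mat K K (\<lambda>(a, b). \<Sum>i\<le>n. (g i * h (n - i)) $$ (a, b))"

definition Btilde :: "triple \<Rightarrow> complex mat" where
  "Btilde x = (case x of (B, \<psi>, \<psi>b) \<Rightarrow> B + \<psi> * \<psi>b)"

text \<open>pi_N(B,psi,psibar) = 1 + psibar (z - Btilde/2)^{-1} psi
   = 1 + sum_{i>=0} psibar (Btilde/2)^i psi z^{-(i+1)}, as coefficient sequence.\<close>
definition pi_map :: "nat \<Rightarrow> triple \<Rightarrow> nat \<Rightarrow> complex mat" where
  "pi_map K x i = (case x of (B, \<psi>, \<psi>b) \<Rightarrow>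
     (case i of 0 \<Rightarrow> 1\<^sub>m K
      | Suc j \<Rightarrow> \<psi>b * ((1/2 :: complex) \<cdot>\<^sub>m Btilde x) ^\<^sub>m j * \<psi>))"

definition iota :: "nat \<Rightarrow> nat \<Rightarrow> nat \<Rightarrow> triple \<Rightarrow> triple" where
  "iota K N N' x = (case x of (B, \<psi>, \<psi>b) \<Rightarrow>
     (four_block_mat B (0\<^sub>m N (N' - N)) (0\<^sub>m (N' - N) N) (0\<^sub>m (N' - N) (N' - N)),
      mat N' K (\<lambda>(i, j). if i < N then \<psi> $$ (i, j) else 0),
      mat K N' (\<lambda>(i, j). if j < N then \<psi>b $$ (i, j) else 0)))"

definition mmap :: "nat \<Rightarrow> nat \<Rightarrow> nat \<Rightarrow> triple \<Rightarrow> triple \<Rightarrow> triple" where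
  "mmap K N1 N2 x y = (case x of (B1, \<psi>1, \<psi>b1) \<Rightarrow> case y of (B2, \<psi>2, \<psi>b2) \<Rightarrow>
     (four_block_mat B1 (\<psi>1 * \<psi>b2) (- (\<psi>2 * \<psi>b1)) B2,
      mat (N1 + N2) K (\<lambda>(i, j). if i < N1 then \<psi>1 $$ (i, j) else \<psi>2 $$ (i - N1, j)),
      mat K (N1 + N2) (\<lambda>(i, j). if j < N1 then \<psi>b1 $$ (i, j) else \<psi>b2 $$ (i, j - N1))))"

end

theory Submission
  imports Defs
begin

lemma assoc': "dim_col A = dim_row B \<Longrightarrow> dim_col B = dim_row C \<Longrightarrow> A * (B * C) = A * B * C"
  by (rule assoc_mult_mat[symmetric, of A "dim_row A" "dim_col A" B "dim_col B" C "dim_col C"]) auto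

lemma pi_carrier: "x \<in> Rep N K \<Longrightarrow> pi_map K x i \<in> carrier_mat K K"
  by (cases i) (auto simp: pi_map_def Rep_def Btilde_def)

primrec Sf :: "nat \<Rightarrow> nat \<Rightarrow> complex mat \<Rightarrow> complex mat \<Rightarrow> complex mat \<Rightarrow> nat \<Rightarrow> complex mat" where
  "Sf n m A C D 0 = 0\<^sub>m n m"
| "Sf n m A C D (Suc j) = A ^\<^sub>m j * C + Sf n m A C D j * D"

lemma Sf_carrier: "A \<in> carrier_mat n n \<Longrightarrow> C \<in> carrier_mat n m \<Longrightarrow> D \<in> carrier_mat m m \<Longrightarrow>
  Sf n m A C D j \<in> carrier_mat n m"
  by (induct j) auto

lemma add_mult': "dim_col A = dim_row C \<Longrightarrow> dim_row A = dim_row B \<Longrightarrow> dim_col A = dim_col B \<Longrightarrow>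
  (A + B) * C = A * C + B * (C :: 'a :: semiring_0 mat)"
  by (rule add_mult_distrib_mat[of A "dim_row A" "dim_col A"]) auto

lemma mult_add': "dim_col A = dim_row B \<Longrightarrow> dim_row B = dim_row C \<Longrightarrow> dim_col B = dim_col C \<Longrightarrow>
  A * (B + C) = A * B + A * (C :: 'a :: semiring_0 mat)"
  by (rule mult_add_distrib_mat[of A "dim_row A" "dim_col A"]) auto

lemma right_add_zero': "dim_row A = nr \<Longrightarrow> dim_col A = nc \<Longrightarrow> A + 0\<^sub>m nr nc = (A :: 'a :: monoid_add mat)"
  by (rule right_add_zero_mat) auto

lemma left_add_zero': "dim_row A = nr \<Longrightarrow> dim_col A = nc \<Longrightarrow> 0\<^sub>m nr nc + A = (A :: 'a :: monoid_add mat)"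
  by (rule left_add_zero_mat) auto

lemma pow_block:
  assumes A: "A \<in> carrier_mat n n" and C: "C \<in> carrier_mat n m" and D: "D \<in> carrier_mat m m"
  shows "four_block_mat A C (0\<^sub>m m n) D ^\<^sub>m j = four_block_mat (A ^\<^sub>m j) (Sf n m A C D j) (0\<^sub>m m n) (D ^\<^sub>m j)"
proof (induct j)
  case 0
  have "dim_row A = n" "dim_row D = m" using A D by auto
  then show ?case by simp
next
  case (Suc j)
  have S: "Sf n m A C D j \<in> carrier_mat n m" using Sf_carrier[OF A C D] .
  have dims: "dim_row A = n" "dim_col A = n" "dim_row C = n" "dim_col C = m" "dim_row D = m" "dim_col D = m"
    "dim_row (Sf n m A C D j) = n" "dim_col (Sf n m A C D j) = m"
    using A C D S by auto
  have "four_block_mat A C (0\<^sub>m m n) D ^\<^sub>m Suc j = four_block_mat (A ^\<^sub>m j) (Sf n m A C D j) (0\<^sub>m m n) (D ^\<^sub>m j)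
      * four_block_mat A C (0\<^sub>m m n) D" by (simp only: pow_mat.simps Suc)
  also have "\<dots> = four_block_mat (A ^\<^sub>m j * A + Sf n m A C D j * 0\<^sub>m m n) (A ^\<^sub>m j * C + Sf n m A C D j * D)
    (0\<^sub>m m n * A + D ^\<^sub>m j * 0\<^sub>m m n) (0\<^sub>m m n * C + D ^\<^sub>m j * D)"
    by (rule mult_four_block_mat[of _ n n _ m _ m _ _ n _ m]) (simp_all add: A C D S)
  also have "\<dots> = four_block_mat (A ^\<^sub>m Suc j) (Sf n m A C D (Suc j)) (0\<^sub>m m n) (D ^\<^sub>m Suc j)"
    using dims by (simp add: right_add_zero' left_add_zero')
  finally show ?case .
qed

lemma Sf_sum:
  assumes A1: "A1 \<in> carrier_mat N1 N1" and A2: "A2 \<in> carrier_mat N2 N2"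
    and p1: "p1 \<in> carrier_mat N1 K" and q1: "q1 \<in> carrier_mat K N1"
    and q2: "q2 \<in> carrier_mat K N2"
  shows "\<And>Z a b. Z \<in> carrier_mat N2 K \<Longrightarrow> a < K \<Longrightarrow> b < K \<Longrightarrow>
     (q1 * Sf N1 N2 A1 (p1 * q2) A2 j * Z) $$ (a, b) =
     (\<Sum>i<j. (q1 * A1 ^\<^sub>m i * p1 * (q2 * A2 ^\<^sub>m (j - 1 - i) * Z)) $$ (a, b))"
proof (induct j)
  case 0
  then show ?case using q1 by simp
next
  case (Suc j)
  have S: "Sf N1 N2 A1 (p1 * q2) A2 j \<in> carrier_mat N1 N2" using Sf_carrier A1 A2 p1 q2 by auto
  have AZ: "A2 * Z \<in> carrier_mat N2 K" using Suc A2 by auto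
  have dims: "dim_row A1 = N1" "dim_col A1 = N1" "dim_row A2 = N2" "dim_col A2 = N2"
    "dim_row p1 = N1" "dim_col p1 = K" "dim_row q1 = K" "dim_col q1 = N1" "dim_row q2 = K" "dim_col q2 = N2"
    "dim_row Z = N2" "dim_col Z = K"
    "dim_row (Sf N1 N2 A1 (p1 * q2) A2 j) = N1" "dim_col (Sf N1 N2 A1 (p1 * q2) A2 j) = N2"
    using A1 A2 p1 q1 q2 S Suc(2) by auto
  have e1: "q1 * Sf N1 N2 A1 (p1 * q2) A2 (Suc j) * Z
     = q1 * A1 ^\<^sub>m j * p1 * (q2 * A2 ^\<^sub>m 0 * Z) + q1 * Sf N1 N2 A1 (p1 * q2) A2 j * (A2 * Z)"
    using dims by (simp add: mult_add' add_mult' assoc')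
  have e2: "(\<Sum>i<j. (q1 * A1 ^\<^sub>m i * p1 * (q2 * A2 ^\<^sub>m (j - 1 - i) * (A2 * Z))) $$ (a, b))
     = (\<Sum>i<j. (q1 * A1 ^\<^sub>m i * p1 * (q2 * A2 ^\<^sub>m (Suc j - 1 - i) * Z)) $$ (a, b))"
  proof (rule sum.cong)
    fix i assume "i \<in> {..<j}"
    then have "Suc j - 1 - i = Suc (j - 1 - i)" by auto
    then show "(q1 * A1 ^\<^sub>m i * p1 * (q2 * A2 ^\<^sub>m (j - 1 - i) * (A2 * Z))) $$ (a, b)
     = (q1 * A1 ^\<^sub>m i * p1 * (q2 * A2 ^\<^sub>m (Suc j - 1 - i) * Z)) $$ (a, b)"
      using dims by (simp add: assoc')
  qed simp
  have "(q1 * Sf N1 N2 A1 (p1 * q2) A2 (Suc j) * Z) $$ (a, b) =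
     (q1 * A1 ^\<^sub>m j * p1 * (q2 * A2 ^\<^sub>m 0 * Z)) $$ (a, b) + (q1 * Sf N1 N2 A1 (p1 * q2) A2 j * (A2 * Z)) $$ (a, b)"
    unfolding e1 using dims Suc(3,4) by simp
  also have "\<dots> = (q1 * A1 ^\<^sub>m j * p1 * (q2 * A2 ^\<^sub>m 0 * Z)) $$ (a, b) +
     (\<Sum>i<j. (q1 * A1 ^\<^sub>m i * p1 * (q2 * A2 ^\<^sub>m (j - 1 - i) * (A2 * Z))) $$ (a, b))"
    using Suc(1)[OF AZ Suc(3) Suc(4)] by simp
  also have "\<dots> = (\<Sum>i<Suc j. (q1 * A1 ^\<^sub>m i * p1 * (q2 * A2 ^\<^sub>m (Suc j - 1 - i) * Z)) $$ (a, b))"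
    unfolding e2 by (simp add: sum.lessThan_Suc)
  finally show ?case .
qed

lemma part2:
  assumes B1: "B1 \<in> carrier_mat N1 N1" and p1: "p1 \<in> carrier_mat N1 K" and q1: "q1 \<in> carrier_mat K N1"
    and B2: "B2 \<in> carrier_mat N2 N2" and p2: "p2 \<in> carrier_mat N2 K" and q2: "q2 \<in> carrier_mat K N2"
  shows "pi_map K (mmap K N1 N2 (B1, p1, q1) (B2, p2, q2)) n
       = loop_mult K (pi_map K (B1, p1, q1)) (pi_map K (B2, p2, q2)) n"
proof -
  define P where "P = mat (N1 + N2) K (\<lambda>(i, j). if i < N1 then p1 $$ (i, j) else p2 $$ (i - N1, j))"
  define Q where "Q = mat K (N1 + N2) (\<lambda>(i, j). if j < N1 then q1 $$ (i, j) else q2 $$ (i, j - N1))"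
  define Bm where "Bm = four_block_mat B1 (p1 * q2) (- (p2 * q1)) B2"
  define A1 where "A1 = (1/2 :: complex) \<cdot>\<^sub>m (B1 + p1 * q1)"
  define A2 where "A2 = (1/2 :: complex) \<cdot>\<^sub>m (B2 + p2 * q2)"
  define M where "M = (1/2 :: complex) \<cdot>\<^sub>m Btilde (Bm, P, Q)"
  have mm: "mmap K N1 N2 (B1, p1, q1) (B2, p2, q2) = (Bm, P, Q)"
    unfolding mmap_def P_def Q_def Bm_def by simp
  have dims: "dim_row B1 = N1" "dim_col B1 = N1" "dim_row B2 = N2" "dim_col B2 = N2"
    "dim_row p1 = N1" "dim_col p1 = K" "dim_row q1 = K" "dim_col q1 = N1"
    "dim_row p2 = N2" "dim_col p2 = K" "dim_row q2 = K" "dim_col q2 = N2"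
    using assms by auto
  have A1c: "A1 \<in> carrier_mat N1 N1" and A2c: "A2 \<in> carrier_mat N2 N2"
    using assms unfolding A1_def A2_def by auto
  have hP: "P = four_block_mat p1 (0\<^sub>m N1 0) p2 (0\<^sub>m N2 0)"
    unfolding P_def by (rule eq_matI) (use dims in auto)
  have hQ: "Q = four_block_mat q1 q2 (0\<^sub>m 0 N1) (0\<^sub>m 0 N2)"
    unfolding Q_def by (rule eq_matI) (use dims in auto)
  have hPQ: "P * Q = four_block_mat (p1 * q1) (p1 * q2) (p2 * q1) (p2 * q2)"
    unfolding hP hQ
    by (subst mult_four_block_mat[of _ N1 K _ 0 _ N2 _ _ N1 _ N2]) (simp_all add: assms dims right_add_zero')
  have hM: "M = four_block_mat A1 (p1 * q2) (0\<^sub>m N2 N1) A2"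
    unfolding M_def Btilde_def A1_def A2_def
    by (simp add: hPQ Bm_def, rule eq_matI) (use dims in \<open>auto simp: algebra_simps\<close>)
  have G: "pi_map K (B1, p1, q1) (Suc i) = q1 * A1 ^\<^sub>m i * p1" for i
    by (simp add: pi_map_def Btilde_def A1_def)
  have H: "pi_map K (B2, p2, q2) (Suc i) = q2 * A2 ^\<^sub>m i * p2" for i
    by (simp add: pi_map_def Btilde_def A2_def)
  have G0: "pi_map K (B1, p1, q1) 0 = 1\<^sub>m K" and H0: "pi_map K (B2, p2, q2) 0 = 1\<^sub>m K"
    by (simp_all add: pi_map_def)
  show ?thesis
  proof (cases n)
    case 0
    show ?thesis unfolding mm loop_mult_def 0
      by (rule eq_matI) (simp_all add: pi_map_def)
  next
    case (Suc j)
    define S where "S = Sf N1 N2 A1 (p1 * q2) A2 j"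
    have Sc: "S \<in> carrier_mat N1 N2" unfolding S_def using Sf_carrier A1c A2c p1 q2 by auto
    have dims2: "dim_row A1 = N1" "dim_col A1 = N1" "dim_row A2 = N2" "dim_col A2 = N2"
      "dim_row S = N1" "dim_col S = N2" using A1c A2c Sc by auto
    have Mj: "M ^\<^sub>m j = four_block_mat (A1 ^\<^sub>m j) S (0\<^sub>m N2 N1) (A2 ^\<^sub>m j)"
      unfolding hM S_def by (rule pow_block[OF A1c _ A2c]) (use p1 q2 in auto)
    have QM: "Q * M ^\<^sub>m j = four_block_mat (q1 * A1 ^\<^sub>m j) (q1 * S + q2 * A2 ^\<^sub>m j) (0\<^sub>m 0 N1) (0\<^sub>m 0 N2)"
      unfolding Mj hQ
      by (subst mult_four_block_mat[of _ K N1 _ N2 _ 0 _ _ N1 _ N2])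
        (simp_all add: assms Sc A1c A2c dims dims2 right_add_zero' left_add_zero')
    have QMP: "Q * M ^\<^sub>m j * P = four_block_mat (q1 * A1 ^\<^sub>m j * p1 + (q1 * S + q2 * A2 ^\<^sub>m j) * p2)
        (q1 * A1 ^\<^sub>m j * 0\<^sub>m N1 0 + (q1 * S + q2 * A2 ^\<^sub>m j) * 0\<^sub>m N2 0)
        (0\<^sub>m 0 N1 * p1 + 0\<^sub>m 0 N2 * p2) (0\<^sub>m 0 N1 * 0\<^sub>m N1 0 + 0\<^sub>m 0 N2 * 0\<^sub>m N2 0)"
    proof -
      have c1: "q1 * A1 ^\<^sub>m j \<in> carrier_mat K N1" using q1 A1c by auto
      have c2: "q1 * S + q2 * A2 ^\<^sub>m j \<in> carrier_mat K N2" using q1 q2 Sc A2c by auto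
      show ?thesis unfolding QM hP
        by (rule mult_four_block_mat[of _ K N1 _ N2 _ 0 _ _ K _ 0]) (simp_all add: assms c1 c2)
    qed
    have lhs: "pi_map K (mmap K N1 N2 (B1, p1, q1) (B2, p2, q2)) n = Q * M ^\<^sub>m j * P"
      unfolding mm Suc M_def by (simp add: pi_map_def)
    show ?thesis
    proof (rule eq_matI)
      fix a b assume a: "a < dim_row (loop_mult K (pi_map K (B1, p1, q1)) (pi_map K (B2, p2, q2)) n)"
        and b: "b < dim_col (loop_mult K (pi_map K (B1, p1, q1)) (pi_map K (B2, p2, q2)) n)"
      then have a: "a < K" and b: "b < K" by (simp_all add: loop_mult_def)
      have L: "(Q * M ^\<^sub>m j * P) $$ (a, b) = (q1 * A1 ^\<^sub>m j * p1) $$ (a, b) + (q1 * S * p2) $$ (a, b)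
          + (q2 * A2 ^\<^sub>m j * p2) $$ (a, b)"
        unfolding QMP using a b dims dims2 by (simp add: add_mult')
      have R: "loop_mult K (pi_map K (B1, p1, q1)) (pi_map K (B2, p2, q2)) n $$ (a, b)
         = (q2 * A2 ^\<^sub>m j * p2) $$ (a, b) +
           ((\<Sum>i<j. (q1 * A1 ^\<^sub>m i * p1 * (q2 * A2 ^\<^sub>m (j - 1 - i) * p2)) $$ (a, b))
           + (q1 * A1 ^\<^sub>m j * p1) $$ (a, b))"
      proof -
        have "loop_mult K (pi_map K (B1, p1, q1)) (pi_map K (B2, p2, q2)) n $$ (a, b)
           = (\<Sum>i\<le>Suc j. (pi_map K (B1, p1, q1) i * pi_map K (B2, p2, q2) (Suc j - i)) $$ (a, b))"
          unfolding loop_mult_def Suc using a b by simp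
        also have "\<dots> = (pi_map K (B1, p1, q1) 0 * pi_map K (B2, p2, q2) (Suc j)) $$ (a, b) +
           ((\<Sum>i<j. (pi_map K (B1, p1, q1) (Suc i) * pi_map K (B2, p2, q2) (Suc j - Suc i)) $$ (a, b))
           + (pi_map K (B1, p1, q1) (Suc j) * pi_map K (B2, p2, q2) 0) $$ (a, b))"
          apply (subst sum.atMost_Suc_shift)
          apply (simp only: lessThan_Suc_atMost[symmetric] sum.lessThan_Suc diff_self_eq_0 diff_zero add.assoc)
          done
        also have "(\<Sum>i<j. (pi_map K (B1, p1, q1) (Suc i) * pi_map K (B2, p2, q2) (Suc j - Suc i)) $$ (a, b))
           = (\<Sum>i<j. (q1 * A1 ^\<^sub>m i * p1 * (q2 * A2 ^\<^sub>m (j - 1 - i) * p2)) $$ (a, b))"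
        proof (rule sum.cong)
          fix i assume "i \<in> {..<j}"
          then have "Suc j - Suc i = Suc (j - 1 - i)" by auto
          then show "(pi_map K (B1, p1, q1) (Suc i) * pi_map K (B2, p2, q2) (Suc j - Suc i)) $$ (a, b)
              = (q1 * A1 ^\<^sub>m i * p1 * (q2 * A2 ^\<^sub>m (j - 1 - i) * p2)) $$ (a, b)"
            by (simp only: G H)
        qed simp
        finally show ?thesis using dims dims2 by (simp add: G H G0 H0)
      qed
      show "pi_map K (mmap K N1 N2 (B1, p1, q1) (B2, p2, q2)) n $$ (a, b) =
          loop_mult K (pi_map K (B1, p1, q1)) (pi_map K (B2, p2, q2)) n $$ (a, b)"
        unfolding lhs L R S_def
        using Sf_sum[OF A1c A2c p1 q1 q2 p2 a b, of j] by simp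
    next
      show "dim_row (pi_map K (mmap K N1 N2 (B1, p1, q1) (B2, p2, q2)) n) =
          dim_row (loop_mult K (pi_map K (B1, p1, q1)) (pi_map K (B2, p2, q2)) n)"
        unfolding lhs QMP using dims dims2 by (simp add: loop_mult_def)
      show "dim_col (pi_map K (mmap K N1 N2 (B1, p1, q1) (B2, p2, q2)) n) =
          dim_col (loop_mult K (pi_map K (B1, p1, q1)) (pi_map K (B2, p2, q2)) n)"
        unfolding lhs QMP using dims dims2 by (simp add: loop_mult_def)
    qed
  qed
qed

lemma part1:
  assumes NN: "N < N'" and B: "B \<in> carrier_mat N N" and p: "p \<in> carrier_mat N K" and q: "q \<in> carrier_mat K N"
  shows "pi_map K (iota K N N' (B, p, q)) n = pi_map K (B, p, q) n"
proof -
  define M where "M = N' - N"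
  have NM: "N + M = N'" using NN unfolding M_def by simp
  have dims: "dim_row B = N" "dim_col B = N" "dim_row p = N" "dim_col p = K" "dim_row q = K" "dim_col q = N"
    using assms by auto
  have e1: "four_block_mat B (0\<^sub>m N (N' - N)) (0\<^sub>m (N' - N) N) (0\<^sub>m (N' - N) (N' - N))
      = four_block_mat B (p * 0\<^sub>m K M) (- (0\<^sub>m M K * q)) (0\<^sub>m M M)"
    unfolding M_def by (rule eq_matI) (use dims in auto)
  have e2: "mat N' K (\<lambda>(i, j). if i < N then p $$ (i, j) else 0)
      = mat (N + M) K (\<lambda>(i, j). if i < N then p $$ (i, j) else 0\<^sub>m M K $$ (i - N, j))"
    by (rule eq_matI) (use NM in auto)
  have e3: "mat K N' (\<lambda>(i, j). if j < N then q $$ (i, j) else 0)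
      = mat K (N + M) (\<lambda>(i, j). if j < N then q $$ (i, j) else 0\<^sub>m K M $$ (i, j - N))"
    by (rule eq_matI) (use NM in auto)
  have io: "iota K N N' (B, p, q) = mmap K N M (B, p, q) (0\<^sub>m M M, 0\<^sub>m M K, 0\<^sub>m K M)"
    unfolding iota_def mmap_def using e1 e2 e3 by simp
  have Rx: "(B, p, q) \<in> Rep N K" using assms by (simp add: Rep_def)
  have Gc: "\<And>i. pi_map K (B, p, q) i \<in> carrier_mat K K" using pi_carrier[OF Rx] .
  have H0: "pi_map K (0\<^sub>m M M, 0\<^sub>m M K, 0\<^sub>m K M) (Suc i) = 0\<^sub>m K K" for i
    by (simp add: pi_map_def Btilde_def)
  have H00: "pi_map K (0\<^sub>m M M, 0\<^sub>m M K, 0\<^sub>m K M) 0 = 1\<^sub>m K"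
    by (simp add: pi_map_def)
  have "pi_map K (iota K N N' (B, p, q)) n
      = loop_mult K (pi_map K (B, p, q)) (pi_map K (0\<^sub>m M M, 0\<^sub>m M K, 0\<^sub>m K M)) n"
    unfolding io by (rule part2[OF B p q]) auto
  also have "\<dots> = pi_map K (B, p, q) n"
  proof (rule eq_matI)
    fix a b assume "a < dim_row (pi_map K (B, p, q) n)" "b < dim_col (pi_map K (B, p, q) n)"
    then have a: "a < K" and b: "b < K" using Gc[of n] by auto
    have "(\<Sum>i\<le>n. (pi_map K (B, p, q) i * pi_map K (0\<^sub>m M M, 0\<^sub>m M K, 0\<^sub>m K M) (n - i)) $$ (a, b))
       = (\<Sum>i<n. (pi_map K (B, p, q) i * pi_map K (0\<^sub>m M M, 0\<^sub>m M K, 0\<^sub>m K M) (n - i)) $$ (a, b))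
         + (pi_map K (B, p, q) n * pi_map K (0\<^sub>m M M, 0\<^sub>m M K, 0\<^sub>m K M) (n - n)) $$ (a, b)"
      by (simp only: lessThan_Suc_atMost[symmetric] sum.lessThan_Suc)
    also have "(\<Sum>i<n. (pi_map K (B, p, q) i * pi_map K (0\<^sub>m M M, 0\<^sub>m M K, 0\<^sub>m K M) (n - i)) $$ (a, b)) = 0"
    proof (rule sum.neutral, rule ballI)
      fix i assume "i \<in> {..<n}"
      then have "n - i = Suc (n - i - 1)" by auto
      then have "pi_map K (0\<^sub>m M M, 0\<^sub>m M K, 0\<^sub>m K M) (n - i) = 0\<^sub>m K K" using H0 by metis
      moreover have "dim_col (pi_map K (B, p, q) i) = K" "dim_row (pi_map K (B, p, q) i) = K" using Gc[of i] by auto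
      ultimately show "(pi_map K (B, p, q) i * pi_map K (0\<^sub>m M M, 0\<^sub>m M K, 0\<^sub>m K M) (n - i)) $$ (a, b) = 0"
        using a b by simp
    qed
    also have "(pi_map K (B, p, q) n * pi_map K (0\<^sub>m M M, 0\<^sub>m M K, 0\<^sub>m K M) (n - n)) $$ (a, b)
       = pi_map K (B, p, q) n $$ (a, b)"
      using H00 Gc[of n] by simp
    finally show "loop_mult K (pi_map K (B, p, q)) (pi_map K (0\<^sub>m M M, 0\<^sub>m M K, 0\<^sub>m K M)) n $$ (a, b)
       = pi_map K (B, p, q) n $$ (a, b)"
      unfolding loop_mult_def using a b by simp
  qed (use Gc[of n] in \<open>auto simp: loop_mult_def\<close>)
  finally show ?thesis .
qed

theorem mainTheorem14:
  shows "(\<forall>K N N' x. N < N' \<and> x \<in> Rep N K \<longrightarrow> pi_map K (iota K N N' x) = pi_map K x)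
       \<and> (\<forall>K N1 N2 x y. x \<in> Rep N1 K \<and> y \<in> Rep N2 K \<longrightarrow>
            pi_map K (mmap K N1 N2 x y) = loop_mult K (pi_map K x) (pi_map K y))"
proof (intro conjI allI impI)
  fix K N N' x assume h: "N < N' \<and> x \<in> Rep N K"
  obtain B p q where x: "x = (B, p, q)" by (cases x) auto
  show "pi_map K (iota K N N' x) = pi_map K x"
    using h unfolding x Rep_def by (intro ext part1) auto
next
  fix K N1 N2 x y assume h: "x \<in> Rep N1 K \<and> y \<in> Rep N2 K"
  obtain B1 p1 q1 where x: "x = (B1, p1, q1)" by (cases x) auto
  obtain B2 p2 q2 where y: "y = (B2, p2, q2)" by (cases y) auto
  show "pi_map K (mmap K N1 N2 x y) = loop_mult K (pi_map K x) (pi_map K y)"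
    using h unfolding x y Rep_def by (intro ext part2) auto
qed

end
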